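(* Let $k$ be a positive integer and $n \ge 2$. (a) If $n\le k+2$, then $\dim_{k,f}(P_n)=1$. (b) If $k+3\le n\le 2k+3$, then $\dim_{k,f}(P_n)=\frac{6+2k-n}{5+2k-n}$. (c) Let $n\ge 2k+4$. (i) If $n \equiv 1 \pmod{2k+2}$, then $\dim_{k,f}(P_n)=\frac{n+k}{2k+2}$. (ii) If $n \equiv j \pmod{2k+2}$ for some $j\in\{2, 3, \ldots, k+2\}$, then $\dim_{k,f}(P_n)=\lceil\frac{n}{2k+2}\rceil$. (iii) If $n\equiv 0 \pmod{2k+2}$ or $n\equiv j \pmod{2k+2}$ for some $j\in\{k+3, k+4, \ldots, 2k+1\}$, then $\lceil\frac{n}{2k+2}\rceil \le \dim_{k,f}(P_n) \le \lceil\frac{n}{2k+2}\rceil +\frac{1}{2}$.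
   Context: $P_n$ is the path on $n$ vertices. $d(x,y)$ is the distance in $G$. For a positive integer $k$, $d_k(x,y)=\min\{d(x,y),k+1\}$ and $R_k\{x,y\}=\{z\in V(G): d_k(x,z)\neq d_k(y,z)\}$. For a function $g$ on $V(G)$ and $U\subseteq V(G)$, $g(U)=\sum_{s\in U}g(s)$. A function $h:V(G)\to[0,1]$ is a $k$-truncated resolving function of $G$ if $h(R_k\{x,y\})\ge 1$ for all distinct $x,y\in V(G)$; $\dim_{k,f}(G)$ is the minimum of $h(V(G))$ over all such $h$. *)

theory Defs
  imports Complex_Main
begin

definition gdist :: "('a \<times> 'a) set \<Rightarrow> 'a \<Rightarrow> 'a \<Rightarrow> nat" where
  "gdist E x y = (LEAST m. (x, y) \<in> E ^^ m)"

definition tdist :: "nat \<Rightarrow> ('a \<times> 'a) set \<Rightarrow> 'a \<Rightarrow> 'a \<Rightarrow> nat" where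
  "tdist k E x y = min (gdist E x y) (k + 1)"

definition resolv_set :: "nat \<Rightarrow> 'a set \<Rightarrow> ('a \<times> 'a) set \<Rightarrow> 'a \<Rightarrow> 'a \<Rightarrow> 'a set" where
  "resolv_set k V E x y = {z \<in> V. tdist k E x z \<noteq> tdist k E y z}"

definition is_k_trunc_resolving_fn ::
  "nat \<Rightarrow> 'a set \<Rightarrow> ('a \<times> 'a) set \<Rightarrow> ('a \<Rightarrow> real) \<Rightarrow> bool" where
  "is_k_trunc_resolving_fn k V E h \<longleftrightarrow>
     (\<forall>v\<in>V. 0 \<le> h v \<and> h v \<le> 1) \<and>
     (\<forall>x\<in>V. \<forall>y\<in>V. x \<noteq> y \<longrightarrow> sum h (resolv_set k V E x y) \<ge> 1)"

definition frac_trunc_dim :: "nat \<Rightarrow> 'a set \<Rightarrow> ('a \<times> 'a) set \<Rightarrow> real" where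
  "frac_trunc_dim k V E = Inf {sum h V | h. is_k_trunc_resolving_fn k V E h}"

definition path_V :: "nat \<Rightarrow> nat set" where
  "path_V n = {0..<n}"

definition path_E :: "nat \<Rightarrow> (nat \<times> nat) set" where
  "path_E n = {(i, j). i < n \<and> j < n \<and> (i = j + 1 \<or> j = i + 1)}"

abbreviation dimP :: "nat \<Rightarrow> nat \<Rightarrow> real" where
  "dimP k n \<equiv> frac_trunc_dim k (path_V n) (path_E n)"

end

theory Submission
  imports Defs
begin

lemma relpow_dist:
  "(x, y) \<in> (path_E n) ^^ m \<Longrightarrow> (x - y) + (y - x) \<le> m"
proof (induction m arbitrary: y)
  case 0
  then show ?case by simp
next
  case (Suc m)
  then obtain z where z1: "(x, z) \<in> (path_E n) ^^ m" and z2: "(z, y) \<in> path_E n" by auto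
  have a: "z = y + 1 \<or> y = z + 1" using z2 unfolding path_E_def by simp
  have b: "x - z + (z - x) \<le> m" using Suc.IH[OF z1] .
  from a b show ?case by linarith
qed

lemma relpow_up:
  "x + d < n \<Longrightarrow> (x, x + d) \<in> (path_E n) ^^ d \<and> (x + d, x) \<in> (path_E n) ^^ d"
proof (induction d)
  case 0
  then show ?case by simp
next
  case (Suc d)
  then have IH: "(x, x + d) \<in> (path_E n) ^^ d" "(x + d, x) \<in> (path_E n) ^^ d" by auto
  have e1: "(x + d, x + Suc d) \<in> path_E n" "(x + Suc d, x + d) \<in> path_E n"
    using Suc.prems by (auto simp: path_E_def)
  have "(x, x + Suc d) \<in> (path_E n) ^^ Suc d" using IH(1) e1(1) by auto
  moreover have "(x + Suc d, x) \<in> (path_E n) ^^ Suc d"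
    using relpow_Suc_I2[OF e1(2) IH(2)] by simp
  ultimately show ?case by simp
qed

lemma gdist_path:
  assumes "x < n" "y < n"
  shows "gdist (path_E n) x y = (x - y) + (y - x)"
proof -
  have "(x, y) \<in> (path_E n) ^^ ((x - y) + (y - x))"
  proof (cases "x \<le> y")
    case True
    then show ?thesis using relpow_up[of x "y - x" n] assms by auto
  next
    case False
    then show ?thesis using relpow_up[of y "x - y" n] assms by auto
  qed
  then show ?thesis unfolding gdist_def
    by (rule Least_equality) (rule relpow_dist)
qed

abbreviation RS :: "nat \<Rightarrow> nat \<Rightarrow> nat \<Rightarrow> nat \<Rightarrow> nat set" where
  "RS k n x y \<equiv> resolv_set k (path_V n) (path_E n) x y"

lemma RS_char:
  assumes "x < n" "y < n"
  shows "z \<in> RS k n x y \<longleftrightarrow> z < n \<and> min ((x - z) + (z - x)) (k + 1) \<noteq> min ((y - z) + (z - y)) (k + 1)"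
  using assms by (auto simp: resolv_set_def tdist_def path_V_def gdist_path)

lemma RS_sub: "RS k n x y \<subseteq> {0..<n}"
  by (auto simp: resolv_set_def path_V_def)

lemma RS_sym: "RS k n x y = RS k n y x"
  by (auto simp: resolv_set_def)

abbreviation isres :: "nat \<Rightarrow> nat \<Rightarrow> (nat \<Rightarrow> real) \<Rightarrow> bool" where
  "isres k n h \<equiv> is_k_trunc_resolving_fn k (path_V n) (path_E n) h"

lemma isres_one: "isres k n (\<lambda>_. 1)"
proof -
  have "1 \<le> sum (\<lambda>_. 1::real) (RS k n x y)" if "x < n" "y < n" "x \<noteq> y" for x y
  proof -
    have "0 < y - x + (x - y)" using that(3) by arith
    then have "min (x - x + (x - x)) (k + 1) \<noteq> min (y - x + (x - y)) (k + 1)" by simp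
    then have "x \<in> RS k n x y" using that RS_char[of x n y x k] by blast
    moreover have "finite (RS k n x y)" by (rule finite_subset[OF RS_sub]) simp
    ultimately have "card (RS k n x y) \<ge> 1"
      by (metis One_nat_def Suc_leI card_gt_0_iff empty_iff)
    then show ?thesis by simp
  qed
  then show ?thesis unfolding is_k_trunc_resolving_fn_def path_V_def by simp
qed

lemma dim_ge:
  assumes "\<And>h. isres k n h \<Longrightarrow> c \<le> sum h (path_V n)"
  shows "c \<le> dimP k n"
  unfolding frac_trunc_dim_def
proof (rule cInf_greatest)
  show "{sum h (path_V n) |h. isres k n h} \<noteq> {}" using isres_one by blast
  fix x assume "x \<in> {sum h (path_V n) |h. isres k n h}"
  then obtain h where "x = sum h (path_V n)" "isres k n h" by blast
  then show "c \<le> x" using assms by simp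
qed

lemma dim_le:
  assumes "isres k n h"
  shows "dimP k n \<le> sum h (path_V n)"
  unfolding frac_trunc_dim_def
proof (rule cInf_lower)
  show "sum h (path_V n) \<in> {sum h (path_V n) |h. isres k n h}" using assms by blast
  have "0 \<le> sum g (path_V n)" if "isres k n g" for g
    using that unfolding is_k_trunc_resolving_fn_def by (simp add: sum_nonneg)
  then show "bdd_below {sum h (path_V n) |h. isres k n h}"
    unfolding bdd_below_def by blast
qed


lemma RS_adj:
  assumes "x + 1 < n"
  shows "RS k n x (x + 1) \<subseteq> {x - k..<x + k + 2}"
proof
  fix z assume "z \<in> RS k n x (x + 1)"
  then have h: "min ((x - z) + (z - x)) (k + 1) \<noteq> min ((x + 1 - z) + (z - (x + 1))) (k + 1)"
    using assms RS_char[of x n "x + 1" z k] by simp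
  have "x - k \<le> z"
  proof (rule ccontr)
    assume "\<not> x - k \<le> z"
    then have "k + 1 \<le> (x - z) + (z - x)" "k + 1 \<le> (x + 1 - z) + (z - (x + 1))" by linarith+
    then show False using h by (metis min_absorb2)
  qed
  moreover have "z < x + k + 2"
  proof (rule ccontr)
    assume "\<not> z < x + k + 2"
    then have "k + 1 \<le> (x - z) + (z - x)" "k + 1 \<le> (x + 1 - z) + (z - (x + 1))" by linarith+
    then show False using h by (metis min_absorb2)
  qed
  ultimately show "z \<in> {x - k..<x + k + 2}" by simp
qed

lemma RS_hole:
  assumes "1 \<le> c" "c + 1 < n"
  shows "RS k n (c - 1) (c + 1) \<subseteq> {c - (k + 1)..<c + k + 2} - {c}"
proof
  fix z assume "z \<in> RS k n (c - 1) (c + 1)"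
  then have h: "min ((c - 1 - z) + (z - (c - 1))) (k + 1) \<noteq> min ((c + 1 - z) + (z - (c + 1))) (k + 1)"
    using assms RS_char[of "c - 1" n "c + 1" z k] by simp
  have "c - (k + 1) \<le> z"
  proof (rule ccontr)
    assume "\<not> c - (k + 1) \<le> z"
    then have "k + 1 \<le> (c - 1 - z) + (z - (c - 1))" "k + 1 \<le> (c + 1 - z) + (z - (c + 1))" by linarith+
    then show False using h by (metis min_absorb2)
  qed
  moreover have "z < c + k + 2"
  proof (rule ccontr)
    assume "\<not> z < c + k + 2"
    then have "k + 1 \<le> (c - 1 - z) + (z - (c - 1))" "k + 1 \<le> (c + 1 - z) + (z - (c + 1))" by linarith+
    then show False using h by (metis min_absorb2)
  qed
  moreover have "z \<noteq> c"
  proof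
    assume "z = c"
    then have "(c - 1 - z) + (z - (c - 1)) = (c + 1 - z) + (z - (c + 1))" using assms by simp
    then show False using h by simp
  qed
  ultimately show "z \<in> {c - (k + 1)..<c + k + 2} - {c}" by simp
qed

lemma res_nonneg: "isres k n h \<Longrightarrow> z < n \<Longrightarrow> 0 \<le> h z"
  unfolding is_k_trunc_resolving_fn_def path_V_def by simp

lemma res_sub:
  assumes h: "isres k n h" and xy: "x < n" "y < n" "x \<noteq> y"
    and A: "RS k n x y \<subseteq> A" "A \<subseteq> {0..<n}"
  shows "1 \<le> sum h A"
proof -
  have "1 \<le> sum h (RS k n x y)" using h xy unfolding is_k_trunc_resolving_fn_def path_V_def by simp
  also have "\<dots> \<le> sum h A"
  proof (rule sum_mono2)
    show "finite A" using A(2) by (rule finite_subset) simp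
    show "RS k n x y \<subseteq> A" by (rule A(1))
    fix b assume "b \<in> A - RS k n x y"
    then have "b < n" using A(2) by auto
    then show "0 \<le> h b" by (rule res_nonneg[OF h])
  qed
  finally show ?thesis .
qed

lemma res_block:
  assumes h: "isres k n h" and "a + (2 * k + 2) \<le> n"
  shows "1 \<le> sum h {a..<a + (2 * k + 2)}"
proof (rule res_sub[OF h, of "a + k" "a + k + 1"])
  show "a + k < n" "a + k + 1 < n" "a + k \<noteq> a + k + 1" using assms(2) by auto
  have "RS k n (a + k) (a + k + 1) \<subseteq> {a + k - k..<a + k + k + 2}"
    by (rule RS_adj) (use assms(2) in simp)
  also have "\<dots> = {a..<a + (2 * k + 2)}" by auto
  finally show "RS k n (a + k) (a + k + 1) \<subseteq> {a..<a + (2 * k + 2)}" .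
  show "{a..<a + (2 * k + 2)} \<subseteq> {0..<n}" using assms(2) by auto
qed

lemma res_blocks:
  assumes h: "isres k n h"
  shows "a + m * (2 * k + 2) \<le> n \<Longrightarrow> real m \<le> sum h {a..<a + m * (2 * k + 2)}"
proof (induction m)
  case 0
  then show ?case by simp
next
  case (Suc m)
  have IH: "real m \<le> sum h {a..<a + m * (2 * k + 2)}" using Suc by simp
  have B: "1 \<le> sum h {a + m * (2 * k + 2)..<a + m * (2 * k + 2) + (2 * k + 2)}"
    by (rule res_block[OF h]) (use Suc.prems in simp)
  have "sum h {a..<a + m * (2 * k + 2)} + sum h {a + m * (2 * k + 2)..<a + m * (2 * k + 2) + (2 * k + 2)}
     = sum h {a..<a + m * (2 * k + 2) + (2 * k + 2)}"
    by (rule sum.atLeastLessThan_concat) simp_all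
  moreover have "a + m * (2 * k + 2) + (2 * k + 2) = a + Suc m * (2 * k + 2)" by simp
  ultimately have "sum h {a..<a + Suc m * (2 * k + 2)} = sum h {a..<a + m * (2 * k + 2)} + sum h {a + m * (2 * k + 2)..<a + m * (2 * k + 2) + (2 * k + 2)}"
    by metis
  moreover have "real (Suc m) = real m + 1" by simp
  ultimately show ?case using IH B by linarith
qed

lemma res_left:
  assumes h: "isres k n h" and "k + 2 \<le> n"
  shows "1 \<le> sum h {0..<k + 2}"
proof (rule res_sub[OF h, of 0 1])
  show "0 < n" "1 < n" "(0::nat) \<noteq> 1" using assms(2) by auto
  have "RS k n 0 (0 + 1) \<subseteq> {0 - k..<0 + k + 2}"
    by (rule RS_adj) (use assms(2) in simp)
  then show "RS k n 0 1 \<subseteq> {0..<k + 2}" by simp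
  show "{0..<k + 2} \<subseteq> {0..<n}" using assms(2) by auto
qed

lemma res_right:
  assumes h: "isres k n h" and "k + 2 \<le> n"
  shows "1 \<le> sum h {n - (k + 2)..<n}"
proof (rule res_sub[OF h, of "n - 2" "n - 1"])
  show "n - 2 < n" "n - 1 < n" "n - 2 \<noteq> n - 1" using assms(2) by auto
  have "RS k n (n - 2) (n - 2 + 1) \<subseteq> {n - 2 - k..<n - 2 + k + 2}"
    by (rule RS_adj) (use assms(2) in simp)
  moreover have "n - 2 + 1 = n - 1" using assms(2) by simp
  ultimately have "RS k n (n - 2) (n - 1) \<subseteq> {n - (k + 2)..<n - 2 + k + 2}" by simp
  then show "RS k n (n - 2) (n - 1) \<subseteq> {n - (k + 2)..<n}" using RS_sub[of k n "n - 2" "n - 1"]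
    by (meson Int_greatest atLeastLessThan_iff subset_eq)
  show "{n - (k + 2)..<n} \<subseteq> {0..<n}" by auto
qed

lemma res_holeset:
  assumes h: "isres k n h" and "1 \<le> c" "c + 1 < n" "a \<le> c - (k + 1)" "a \<le> c" "c < b" "b \<le> n"
    and "c + k + 2 \<le> b \<or> b = n"
  shows "1 \<le> sum h {a..<b} - h c"
proof -
  have "1 \<le> sum h ({a..<b} - {c})"
  proof (rule res_sub[OF h, of "c - 1" "c + 1"])
    show "c - 1 < n" "c + 1 < n" "c - 1 \<noteq> c + 1" using assms by auto
    have "RS k n (c - 1) (c + 1) \<subseteq> {c - (k + 1)..<c + k + 2} - {c}" by (rule RS_hole) (use assms in auto)
    then show "RS k n (c - 1) (c + 1) \<subseteq> {a..<b} - {c}"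
    proof (intro subsetI)
      fix z assume "z \<in> RS k n (c - 1) (c + 1)"
      then have z: "z \<in> {c - (k + 1)..<c + k + 2} - {c}" "z < n"
        using RS_sub[of k n "c - 1" "c + 1"] \<open>RS k n (c - 1) (c + 1) \<subseteq> _\<close> by auto
      then show "z \<in> {a..<b} - {c}" using assms(4,8) by auto
    qed
    show "{a..<b} - {c} \<subseteq> {0..<n}" using assms by auto
  qed
  also have "sum h ({a..<b} - {c}) = sum h {a..<b} - h c"
    using assms by (simp add: sum_diff1)
  finally show ?thesis .
qed


lemma cc: "a \<le> b \<Longrightarrow> b \<le> c \<Longrightarrow> sum (h :: nat \<Rightarrow> real) {a..<c} = sum h {a..<b} + sum h {b..<c}"
  using sum.atLeastLessThan_concat[of a b c h] by simp

lemma nonneg_sum: "isres k n h \<Longrightarrow> b \<le> n \<Longrightarrow> 0 \<le> sum h {a..<b}"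
  by (rule sum_nonneg) (auto intro: res_nonneg)

lemma LB_a:
  assumes h: "isres k n h" and "2 \<le> n"
  shows "1 \<le> sum h {0..<n}"
  by (rule res_sub[OF h, of 0 1]) (use assms(2) RS_sub in auto)

lemma LB_b:
  assumes h: "isres k n h" and n1: "k + 3 \<le> n" and n2: "n \<le> 2 * k + 3"
  shows "(6 + 2 * real k - real n) / (5 + 2 * real k - real n) \<le> sum h {0..<n}"
proof -
  define a where "a = n - (k + 2)"
  define M where "M = {a..<k + 2}"
  define H where "H = sum h {0..<n}"
  have a1: "1 \<le> a" "a \<le> k + 2" "a + k + 2 = n" using n1 n2 unfolding a_def by auto
  have cM: "real (card M) = 2 * real k + 4 - real n" unfolding M_def using a1 by simp
  have S1: "1 \<le> sum h {0..<k + 2}" by (rule res_left[OF h]) (use n1 in simp)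
  have S2: "1 \<le> sum h {a..<n}" unfolding a_def by (rule res_right[OF h]) (use n1 in simp)
  have e1: "sum h {0..<k + 2} = sum h {0..<a} + sum h M"
    unfolding M_def by (rule cc) (use a1 in simp_all)
  have e2: "sum h {a..<n} = sum h M + sum h {k + 2..<n}"
    unfolding M_def by (rule cc) (use a1 in simp_all)
  have e3': "H = sum h {0..<a} + sum h {a..<n}"
    unfolding H_def by (rule cc) (use a1 in simp_all)
  have e3: "H = sum h {0..<a} + sum h M + sum h {k + 2..<n}" using e3' e2 by simp
  have "(\<Sum>c\<in>M. (1::real)) \<le> (\<Sum>c\<in>M. H - h c)"
  proof (rule sum_mono)
    fix c assume "c \<in> M"
    then have "a \<le> c" "c < k + 2" unfolding M_def by auto
    then show "1 \<le> H - h c" unfolding H_def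
      by (intro res_holeset[OF h]) (use a1 n1 in auto)
  qed
  then have "real (card M) \<le> real (card M) * H - sum h M"
    by (simp add: sum_subtractf)
  with S1 S2 e1 e2 e3 have key: "real (card M) + 2 \<le> (real (card M) + 1) * H"
    by (simp add: algebra_simps)
  have pos: "0 < 5 + 2 * real k - real n" using n2 by simp
  show ?thesis
    unfolding H_def[symmetric] using key cM pos
    by (simp add: divide_le_eq algebra_simps)
qed

lemma LB_c1:
  assumes h: "isres k n h" and n: "n = m * (2 * k + 2) + 2 * k + 3"
  shows "real m + 3 / 2 \<le> sum h {0..<n}"
proof -
  define c where "c = n - (k + 2)"
  define L where "L = m * (2 * k + 2)"
  have c1: "c = L + k + 1" "k + 2 + L = c + 1" unfolding c_def L_def using n by auto
  have S1: "1 \<le> sum h {0..<k + 2}" by (rule res_left[OF h]) (use n in simp)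
  have S2: "real m \<le> sum h {k + 2..<k + 2 + L}" unfolding L_def by (rule res_blocks[OF h]) (use n in simp)
  have S3: "1 \<le> sum h {c..<n}" unfolding c_def by (rule res_right[OF h]) (use n in simp)
  have T1: "real m \<le> sum h {0..<L}" using res_blocks[OF h, of 0 m] n unfolding L_def by simp
  have T2: "1 \<le> sum h {L..<n} - h c"
    by (rule res_holeset[OF h]) (use n c1 in \<open>auto simp: L_def\<close>)
  have e1: "sum h {0..<c + 1} = sum h {0..<k + 2} + sum h {k + 2..<k + 2 + L}"
    unfolding c1(2)[symmetric] by (rule cc) simp_all
  have e2: "sum h {c..<n} = h c + sum h {c + 1..<n}"
  proof -
    have "c < n" using c1 n by (simp add: L_def)
    then show ?thesis by (simp add: sum.atLeast_Suc_lessThan)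
  qed
  have e3: "sum h {0..<n} = sum h {0..<c + 1} + sum h {c + 1..<n}"
    by (rule cc) (use c1 n in \<open>simp_all add: L_def\<close>)
  have e4: "sum h {0..<n} = sum h {0..<L} + sum h {L..<n}"
    by (rule cc) (use n in \<open>simp_all add: L_def\<close>)
  show ?thesis using S1 S2 S3 T1 T2 e1 e2 e3 e4 by linarith
qed

lemma LB_c2:
  assumes h: "isres k n h" and n: "m * (2 * k + 2) + 2 * k + 4 \<le> n"
  shows "real m + 2 \<le> sum h {0..<n}"
proof -
  define L where "L = m * (2 * k + 2)"
  have S1: "1 \<le> sum h {0..<k + 2}" by (rule res_left[OF h]) (use n in simp)
  have S2: "real m \<le> sum h {k + 2..<k + 2 + L}" unfolding L_def by (rule res_blocks[OF h]) (use n in simp)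
  have S3: "1 \<le> sum h {n - (k + 2)..<n}" by (rule res_right[OF h]) (use n in simp)
  have S4: "0 \<le> sum h {k + 2 + L..<n - (k + 2)}" by (rule nonneg_sum[OF h]) simp
  have f1: "sum h {0..<n} = sum h {0..<k + 2} + sum h {k + 2..<n}"
    by (rule cc) (use n in simp_all)
  have f2: "sum h {k + 2..<n} = sum h {k + 2..<k + 2 + L} + sum h {k + 2 + L..<n}"
    by (rule cc) (use n in \<open>simp_all add: L_def\<close>)
  have f3: "sum h {k + 2 + L..<n} = sum h {k + 2 + L..<n - (k + 2)} + sum h {n - (k + 2)..<n}"
    by (rule cc) (use n in \<open>simp_all add: L_def\<close>)
  have e: "sum h {0..<n} = sum h {0..<k + 2} + sum h {k + 2..<k + 2 + L} + sum h {k + 2 + L..<n - (k + 2)} + sum h {n - (k + 2)..<n}"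
    using f1 f2 f3 by simp
  show ?thesis using S1 S2 S3 S4 e by linarith
qed

lemma LB_c0:
  assumes h: "isres k n h" and n: "n = q * (2 * k + 2)"
  shows "real q \<le> sum h {0..<n}"
  using res_blocks[OF h, of 0 q] n by simp


lemma inRS:
  assumes "x < n" "y < n" "p < n"
    and "(x - p) + (p - x) \<le> k \<or> (y - p) + (p - y) \<le> k"
    and "(x - p) + (p - x) \<noteq> (y - p) + (p - y)"
  shows "p \<in> RS k n x y"
proof -
  have "min ((x - p) + (p - x)) (k + 1) \<noteq> min ((y - p) + (p - y)) (k + 1)"
    using assms(4,5) by (auto simp: min_def)
  then show ?thesis using assms(1-3) RS_char by blast
qed

lemma UB_gen:
  fixes w :: real
  assumes P: "P \<subseteq> {0..<n}" and w: "0 \<le> w" "w \<le> 1"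
    and cov: "\<And>x y. x < y \<Longrightarrow> y < n \<Longrightarrow> 1 \<le> w * real (card (RS k n x y \<inter> P))"
  shows "isres k n (\<lambda>z. if z \<in> P then w else 0)"
  unfolding is_k_trunc_resolving_fn_def
proof (intro conjI ballI impI)
  fix v assume "v \<in> path_V n"
  show "0 \<le> (if v \<in> P then w else 0)" using w by simp
  show "(if v \<in> P then w else 0) \<le> 1" using w by simp
next
  fix x y assume xy: "x \<in> path_V n" "y \<in> path_V n" "x \<noteq> y"
  have fin: "finite (RS k n x y)" by (rule finite_subset[OF RS_sub]) simp
  have eq: "sum (\<lambda>z. if z \<in> P then w else 0) (RS k n x y) = w * real (card (RS k n x y \<inter> P))"
    using sum.inter_restrict[OF fin, of "\<lambda>_. w" P, symmetric] by simp
  have "1 \<le> w * real (card (RS k n x y \<inter> P))"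
  proof (cases "x < y")
    case True
    then show ?thesis using cov xy by (simp add: path_V_def)
  next
    case False
    then have "y < x" using xy(3) by simp
    then show ?thesis using cov[of y x] xy RS_sym[of k n x y] by (simp add: path_V_def)
  qed
  then show "1 \<le> sum (\<lambda>z. if z \<in> P then w else 0) (resolv_set k (path_V n) (path_E n) x y)"
    using eq by simp
qed

lemma sum_ind:
  fixes w :: real
  assumes "P \<subseteq> {0..<n}"
  shows "sum (\<lambda>z. if z \<in> P then w else 0) (path_V n) = w * real (card P)"
proof -
  have "sum (\<lambda>z. if z \<in> P then w else 0) {0..<n} = sum (\<lambda>_. w) ({0..<n} \<inter> P)"
    using sum.inter_restrict[of "{0..<n}" "\<lambda>_. w" P] by simp
  also have "{0..<n} \<inter> P = P" using assms by blast
  finally show ?thesis by (simp add: path_V_def)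
qed

lemma UB_half:
  assumes P: "P \<subseteq> {0..<n}" "0 \<in> P" "n - 1 \<in> P" "1 \<le> n"
    and win: "\<And>a. a + k < n \<Longrightarrow> \<exists>p\<in>P. a \<le> p \<and> p \<le> a + k"
  shows "dimP k n \<le> real (card P) / 2"
proof -
  have "isres k n (\<lambda>z. if z \<in> P then 1/2 else 0)"
  proof (rule UB_gen[OF P(1)])
    fix x y assume xy: "x < y" "y < n"
    obtain p1 where p1: "p1 \<in> P" "p1 \<le> x" "x \<le> p1 + k"
    proof (cases "k \<le> x")
      case True
      then obtain p where "p \<in> P" "x - k \<le> p" "p \<le> x - k + k" using win[of "x - k"] xy by auto
      then show ?thesis using that True by auto
    next
      case False
      then show ?thesis using that P(2) by auto
    qed
    obtain p2 where p2: "p2 \<in> P" "y \<le> p2" "p2 \<le> y + k"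
    proof (cases "y + k < n")
      case True
      then obtain p where "p \<in> P" "y \<le> p" "p \<le> y + k" using win[of y] by auto
      then show ?thesis using that by auto
    next
      case False
      then show ?thesis using that[of "n - 1"] P(3) xy by auto
    qed
    have "p1 < n" "p2 < n" using p1(1) p2(1) P(1) by auto
    have "p1 \<in> RS k n x y" by (rule inRS) (use xy p1 \<open>p1 < n\<close> in auto)
    moreover have "p2 \<in> RS k n x y" by (rule inRS) (use xy p2 \<open>p2 < n\<close> in auto)
    ultimately have sub: "{p1, p2} \<subseteq> RS k n x y \<inter> P" using p1(1) p2(1) by blast
    have "p1 \<noteq> p2" using p1 p2 xy by auto
    then have "card {p1, p2} = 2" by simp
    moreover have "card {p1, p2} \<le> card (RS k n x y \<inter> P)"
      by (rule card_mono[OF _ sub]) (rule finite_subset[OF _ finite_atLeastLessThan[of 0 n]], use RS_sub in blast)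
    ultimately show "1 \<le> 1 / 2 * real (card (RS k n x y \<inter> P))" by simp
  qed simp_all
  then have "dimP k n \<le> sum (\<lambda>z. if z \<in> P then 1/2 else 0) (path_V n)" by (rule dim_le)
  also have "\<dots> = real (card P) / 2" using sum_ind[OF P(1)] by simp
  finally show ?thesis .
qed


lemma UB_mult:
  assumes n: "1 \<le> n"
  shows "dimP k n \<le> real ((n - 1 + k) div (k + 1) + 1) / 2"
proof -
  define Q where "Q = {z. z < n \<and> (k + 1) dvd z}"
  define P where "P = Q \<union> {n - 1}"
  define t where "t = (n - 1) div (k + 1)"
  define r where "r = (n - 1) mod (k + 1)"
  have nr: "n - 1 = (k + 1) * t + r" unfolding t_def r_def by (rule div_mult_mod_eq[symmetric, of "n - 1" "k + 1", simplified mult.commute])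
  have rl: "r < k + 1" unfolding r_def by simp
  have PV: "P \<subseteq> {0..<n}" unfolding P_def Q_def using n by auto
  have "dimP k n \<le> real (card P) / 2"
  proof (rule UB_half[OF PV])
    show "0 \<in> P" unfolding P_def Q_def using n by simp
    show "n - 1 \<in> P" unfolding P_def by simp
    show "1 \<le> n" by (rule n)
    fix a assume a: "a + k < n"
    define p where "p = (a + k) - (a + k) mod (k + 1)"
    have p1: "p = (k + 1) * ((a + k) div (k + 1))" unfolding p_def by (rule minus_mod_eq_mult_div)
    have m: "(a + k) mod (k + 1) < k + 1" by simp
    have "p \<le> a + k" unfolding p_def by simp
    have "a \<le> p" unfolding p_def using m by linarith
    moreover have "p \<in> P"
    proof -
      have "(k + 1) dvd p" using p1 by (metis dvd_triv_left)
      moreover have "p < n" using \<open>p \<le> a + k\<close> a by linarith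
      ultimately show ?thesis unfolding P_def Q_def by blast
    qed
    ultimately show "\<exists>p\<in>P. a \<le> p \<and> p \<le> a + k" using \<open>p \<le> a + k\<close> by (intro bexI[of _ p] conjI)
  qed
  moreover have "card Q \<le> t + 1"
  proof -
    have "Q \<subseteq> (\<lambda>i. i * (k + 1)) ` {0..<t + 1}"
    proof
      fix z assume "z \<in> Q"
      then have z: "z < n" "(k + 1) dvd z" unfolding Q_def by auto
      have "z div (k + 1) \<le> t" unfolding t_def by (rule div_le_mono) (use z in simp)
      moreover have "z = z div (k + 1) * (k + 1)" using z(2) by (metis dvd_div_mult_self)
      ultimately show "z \<in> (\<lambda>i. i * (k + 1)) ` {0..<t + 1}"
        by (intro image_eqI[where x="z div (k + 1)"]) simp_all
    qed
    then have "card Q \<le> card ((\<lambda>i. i * (k + 1)) ` {0..<t + 1})"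
      by (rule card_mono[rotated]) simp
    also have "\<dots> \<le> t + 1" using card_image_le[of "{0..<t + 1}" "\<lambda>i. i * (k + 1)"] by simp
    finally show ?thesis .
  qed
  moreover have "card P \<le> (n - 1 + k) div (k + 1) + 1"
  proof (cases "r = 0")
    case True
    have "(k + 1) dvd (n - 1)" using nr True by (metis add.right_neutral dvd_triv_left)
    then have "n - 1 \<in> Q" unfolding Q_def using n by simp
    then have "P = Q" unfolding P_def by auto
    moreover have "(n - 1 + k) div (k + 1) = t"
      by (rule div_nat_eqI) (use nr True in simp_all)
    ultimately show ?thesis using \<open>card Q \<le> t + 1\<close> by simp
  next
    case False
    have "finite Q" unfolding Q_def by simp
    then have "card P \<le> card Q + 1" unfolding P_def using card_insert_le_m1[of 1 "Q"]
      by (simp add: card_insert_if)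
    moreover have "(n - 1 + k) div (k + 1) = t + 1"
      by (rule div_nat_eqI) (use nr False rl in simp_all)
    ultimately show ?thesis using \<open>card Q \<le> t + 1\<close> by simp
  qed
  ultimately have "real (card P) \<le> real ((n - 1 + k) div (k + 1) + 1)" by linarith
  then have "real (card P) / 2 \<le> real ((n - 1 + k) div (k + 1) + 1) / 2" by simp
  with \<open>dimP k n \<le> real (card P) / 2\<close> show ?thesis by linarith
qed

lemma UBb_A:
  fixes n k x y p :: nat
  assumes "k + 3 \<le> n" "n \<le> 2 * k + 3" "x < y" "y < n" "k < x"
    and "p = n - 1 \<or> (n - (k + 2) \<le> p \<and> p < k + 2)"
  shows "((x - p) + (p - x) \<le> k \<or> (y - p) + (p - y) \<le> k) \<and> (x - p) + (p - x) \<noteq> (y - p) + (p - y)"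
  using assms by linarith
lemma UBb_B:
  fixes n k x y p :: nat
  assumes "k + 3 \<le> n" "n \<le> 2 * k + 3" "x < y" "y < n" "y + k + 1 < n"
    and "p = 0 \<or> (n - (k + 2) \<le> p \<and> p < k + 2)"
  shows "((x - p) + (p - x) \<le> k \<or> (y - p) + (p - y) \<le> k) \<and> (x - p) + (p - x) \<noteq> (y - p) + (p - y)"
  using assms by linarith
lemma UBb_C:
  fixes n k x y p :: nat
  assumes "k + 3 \<le> n" "n \<le> 2 * k + 3" "x < y" "y < n" "x \<le> k" "n \<le> y + k + 1"
    and "p = 0 \<or> p = n - 1 \<or> (n - (k + 2) \<le> p \<and> p < k + 2)"
    and "p \<noteq> m" "x + y = 2 * m \<or> x + y = 2 * m + 1"
  shows "((x - p) + (p - x) \<le> k \<or> (y - p) + (p - y) \<le> k) \<and> (x - p) + (p - x) \<noteq> (y - p) + (p - y)"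
  using assms by linarith

lemma UB_b:
  assumes n1: "k + 3 \<le> n" and n2: "n \<le> 2 * k + 3"
  shows "dimP k n \<le> (6 + 2 * real k - real n) / (5 + 2 * real k - real n)"
proof -
  define M where "M = {n - (k + 2)..<k + 2}"
  define P where "P = insert 0 (insert (n - 1) M)"
  define w where "w = 1 / (5 + 2 * real k - real n)"
  have den: "2 \<le> 5 + 2 * real k - real n" using n2 by simp
  have PV: "P \<subseteq> {0..<n}" unfolding P_def M_def using n1 by auto
  have cM: "card M = 2 * k + 4 - n" unfolding M_def using n1 n2 by simp
  have nM: "0 \<notin> M" "n - 1 \<notin> M" "0 \<noteq> n - 1" unfolding M_def using n1 by auto
  have cP: "card P = card M + 2" unfolding P_def M_def using nM by (simp add: M_def)
  have rcP: "real (card P) = 6 + 2 * real k - real n" using cP cM n1 n2 by simp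
  have finP: "finite P" unfolding P_def M_def by simp
  have "isres k n (\<lambda>z. if z \<in> P then w else 0)"
  proof (rule UB_gen[OF PV])
    show "0 \<le> w" "w \<le> 1" unfolding w_def using den by simp_all
    fix x y assume xy: "x < y" "y < n"
    define m0 where "m0 = (if k < x then 0 else if y + k + 1 < n then n - 1 else (x + y) div 2)"
    have sub: "P - {m0} \<subseteq> RS k n x y \<inter> P"
    proof
      fix p assume p: "p \<in> P - {m0}"
      then have pP: "p = 0 \<or> p = n - 1 \<or> (n - (k + 2) \<le> p \<and> p < k + 2)"
        unfolding P_def M_def by auto
      have pn: "p < n" using p PV by auto
      have pm: "p \<noteq> m0" using p by simp
      have "((x - p) + (p - x) \<le> k \<or> (y - p) + (p - y) \<le> k) \<and> (x - p) + (p - x) \<noteq> (y - p) + (p - y)"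
      proof (cases "k < x")
        case True
        then have "p \<noteq> 0" using pm unfolding m0_def by simp
        then show ?thesis using UBb_A[OF n1 n2 xy True] pP by blast
      next
        case F1: False
        show ?thesis
        proof (cases "y + k + 1 < n")
          case True
          then have "p \<noteq> n - 1" using pm F1 unfolding m0_def by simp
          then show ?thesis using UBb_B[OF n1 n2 xy True] pP by blast
        next
          case False
          then have "p \<noteq> (x + y) div 2" using pm F1 unfolding m0_def by simp
          moreover have "x + y = 2 * ((x + y) div 2) \<or> x + y = 2 * ((x + y) div 2) + 1" by presburger
          ultimately show ?thesis using UBb_C[OF n1 n2 xy, of p "(x + y) div 2"] F1 False pP by linarith
        qed
      qed
      then have "p \<in> RS k n x y" using inRS[of x n y p k] xy pn by linarith
      then show "p \<in> RS k n x y \<inter> P" using p by blast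
    qed
    have "card (P - {m0}) \<le> card (RS k n x y \<inter> P)"
      by (rule card_mono[OF _ sub]) (simp add: finP)
    moreover have "card P - 1 \<le> card (P - {m0})" by (simp add: card_Diff_singleton_if)
    ultimately have "real (card P) - 1 \<le> real (card (RS k n x y \<inter> P))" using cP by linarith
    then have "5 + 2 * real k - real n \<le> real (card (RS k n x y \<inter> P))" using rcP by linarith
    then show "1 \<le> w * real (card (RS k n x y \<inter> P))" unfolding w_def using den
      by (simp add: divide_simps)
  qed
  then have "dimP k n \<le> sum (\<lambda>z. if z \<in> P then w else 0) (path_V n)" by (rule dim_le)
  also have "\<dots> = w * real (card P)" by (rule sum_ind[OF PV])
  also have "\<dots> = (6 + 2 * real k - real n) / (5 + 2 * real k - real n)" unfolding w_def rcP by simp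
  finally show ?thesis .
qed


lemma divq:
  fixes N q k s e :: nat
  assumes "N = q * (2 * k + 2) + s" "(k + 1) * e \<le> s" "s < (k + 1) * (e + 1)"
  shows "N div (k + 1) = 2 * q + e"
proof (rule div_nat_eqI)
  have e: "(k + 1) * (2 * q + e) = q * (2 * k + 2) + (k + 1) * e" by (simp add: algebra_simps)
  show "(k + 1) * (2 * q + e) \<le> N" using assms e by linarith
  have "(k + 1) * Suc (2 * q + e) = q * (2 * k + 2) + (k + 1) * (e + 1)" by (simp add: algebra_simps)
  then show "N < (k + 1) * Suc (2 * q + e)" using assms by linarith
qed

lemma ceil1:
  assumes "n = q * (2 * k + 2) + j" "1 \<le> j" "j \<le> 2 * k + 2"
  shows "\<lceil>real n / (2 * real k + 2)\<rceil> = int q + 1"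
proof (rule ceiling_unique)
  have rn: "real n = real q * (2 * real k + 2) + real j" using assms(1) by (simp add: algebra_simps)
  have p: "0 < 2 * real k + 2" by simp
  show "real_of_int (int q + 1) - 1 < real n / (2 * real k + 2)"
    using p rn assms(2) by (simp add: less_divide_eq)
  show "real n / (2 * real k + 2) \<le> real_of_int (int q + 1)"
    using p rn assms(3) by (simp add: divide_le_eq algebra_simps)
qed

lemma ceil0:
  assumes "n = q * (2 * k + 2)"
  shows "\<lceil>real n / (2 * real k + 2)\<rceil> = int q"
proof -
  have "real n / (2 * real k + 2) = real q" using assms by (simp add: field_simps)
  then show ?thesis by simp
qed

theorem theorem3p11:
  fixes k n :: nat
  assumes "k \<ge> 1" and "n \<ge> 2"
  shows "(n \<le> k + 2 \<longrightarrow> dimP k n = 1)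
    \<and> (k + 3 \<le> n \<and> n \<le> 2 * k + 3 \<longrightarrow>
         dimP k n = (6 + 2 * real k - real n) / (5 + 2 * real k - real n))
    \<and> (n \<ge> 2 * k + 4 \<longrightarrow>
         (n mod (2 * k + 2) = 1 \<longrightarrow> dimP k n = (real n + real k) / (2 * real k + 2))
       \<and> ((\<exists>j\<in>{2..k + 2}. n mod (2 * k + 2) = j) \<longrightarrow>
            dimP k n = of_int \<lceil>real n / (2 * real k + 2)\<rceil>)
       \<and> (n mod (2 * k + 2) = 0 \<or> (\<exists>j\<in>{k + 3..2 * k + 1}. n mod (2 * k + 2) = j) \<longrightarrow>
            of_int \<lceil>real n / (2 * real k + 2)\<rceil> \<le> dimP k n \<and>
            dimP k n \<le> of_int \<lceil>real n / (2 * real k + 2)\<rceil> + 1 / 2))"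
proof -
  have A: "dimP k n = 1" if n3: "n \<le> k + 2"
  proof (rule antisym)
    have "(n - 1 + k) div (k + 1) = 1" by (rule div_nat_eqI) (use n3 assms in simp_all)
    then show "dimP k n \<le> 1" using UB_mult[of n k] assms by simp
    show "1 \<le> dimP k n" by (rule dim_ge) (use LB_a assms in \<open>simp add: path_V_def\<close>)
  qed
  have B: "dimP k n = (6 + 2 * real k - real n) / (5 + 2 * real k - real n)"
    if n3: "k + 3 \<le> n" "n \<le> 2 * k + 3"
  proof (rule antisym)
    show "dimP k n \<le> (6 + 2 * real k - real n) / (5 + 2 * real k - real n)" by (rule UB_b[OF n3])
    show "(6 + 2 * real k - real n) / (5 + 2 * real k - real n) \<le> dimP k n"
      by (rule dim_ge) (use LB_b n3 in \<open>simp add: path_V_def\<close>)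
  qed
  define q where "q = n div (2 * k + 2)"
  define j where "j = n mod (2 * k + 2)"
  have nqj: "n = q * (2 * k + 2) + j" unfolding q_def j_def by (rule div_mult_mod_eq[symmetric])
  have jl: "j < 2 * k + 2" unfolding j_def by simp
  have C: "(n mod (2 * k + 2) = 1 \<longrightarrow> dimP k n = (real n + real k) / (2 * real k + 2))
       \<and> ((\<exists>j\<in>{2..k + 2}. n mod (2 * k + 2) = j) \<longrightarrow>
            dimP k n = of_int \<lceil>real n / (2 * real k + 2)\<rceil>)
       \<and> (n mod (2 * k + 2) = 0 \<or> (\<exists>j\<in>{k + 3..2 * k + 1}. n mod (2 * k + 2) = j) \<longrightarrow>
            of_int \<lceil>real n / (2 * real k + 2)\<rceil> \<le> dimP k n \<and>
            dimP k n \<le> of_int \<lceil>real n / (2 * real k + 2)\<rceil> + 1 / 2)"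
    if n4: "2 * k + 4 \<le> n"
  proof -
    have q1: "1 \<le> q"
    proof (rule ccontr)
      assume "\<not> 1 \<le> q"
      then have "q = 0" by simp
      then show False using nqj jl n4 by simp
    qed
    obtain m where m: "q = m + 1" using q1 by (metis add.commute le_Suc_ex Suc_eq_plus1_left)
    have nm: "n = m * (2 * k + 2) + (2 * k + 2) + j" using nqj m by (simp add: algebra_simps)
    have c1: "n mod (2 * k + 2) = 1 \<longrightarrow> dimP k n = (real n + real k) / (2 * real k + 2)"
    proof
      assume "n mod (2 * k + 2) = 1"
      then have j1: "j = 1" unfolding j_def .
      have n': "n = m * (2 * k + 2) + 2 * k + 3" using nm j1 by simp
      have val: "(real n + real k) / (2 * real k + 2) = real m + 3 / 2"
        using n' by (simp add: field_simps)
      have dv: "(n - 1 + k) div (k + 1) = 2 * q + 0"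
        by (rule divq[of _ q k k 0]) (use nqj j1 in simp_all)
      have "dimP k n \<le> real m + 3 / 2" using UB_mult[of n k] dv m assms by simp
      moreover have "real m + 3 / 2 \<le> dimP k n"
        by (rule dim_ge) (use LB_c1 n' in \<open>simp add: path_V_def\<close>)
      ultimately show "dimP k n = (real n + real k) / (2 * real k + 2)" using val by simp
    qed
    have c2: "(\<exists>j\<in>{2..k + 2}. n mod (2 * k + 2) = j) \<longrightarrow>
            dimP k n = of_int \<lceil>real n / (2 * real k + 2)\<rceil>"
    proof
      assume "\<exists>j\<in>{2..k + 2}. n mod (2 * k + 2) = j"
      then have j2: "2 \<le> j" "j \<le> k + 2" unfolding j_def by auto
      have ce: "of_int \<lceil>real n / (2 * real k + 2)\<rceil> = real q + 1"
        using ceil1[OF nqj] j2 by simp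
      have dv: "(n - 1 + k) div (k + 1) = 2 * q + 1"
        by (rule divq[of _ q k "j - 1 + k" 1]) (use nqj j2 in simp_all)
      have "dimP k n \<le> real q + 1" using UB_mult[of n k] dv assms by simp
      moreover have "real m + 2 \<le> dimP k n"
        by (rule dim_ge) (use LB_c2[of k n _ m] nm j2 in \<open>simp add: path_V_def\<close>)
      ultimately show "dimP k n = of_int \<lceil>real n / (2 * real k + 2)\<rceil>" using ce m by simp
    qed
    have c3: "n mod (2 * k + 2) = 0 \<or> (\<exists>j\<in>{k + 3..2 * k + 1}. n mod (2 * k + 2) = j) \<longrightarrow>
            of_int \<lceil>real n / (2 * real k + 2)\<rceil> \<le> dimP k n \<and>
            dimP k n \<le> of_int \<lceil>real n / (2 * real k + 2)\<rceil> + 1 / 2"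
    proof
      assume "n mod (2 * k + 2) = 0 \<or> (\<exists>j\<in>{k + 3..2 * k + 1}. n mod (2 * k + 2) = j)"
      then have "j = 0 \<or> (k + 3 \<le> j \<and> j \<le> 2 * k + 1)" unfolding j_def by auto
      then show "of_int \<lceil>real n / (2 * real k + 2)\<rceil> \<le> dimP k n \<and>
            dimP k n \<le> of_int \<lceil>real n / (2 * real k + 2)\<rceil> + 1 / 2"
      proof
        assume j0: "j = 0"
        have n0: "n = q * (2 * k + 2)" using nqj j0 by simp
        have ce: "of_int \<lceil>real n / (2 * real k + 2)\<rceil> = real q"
          using ceil0[OF n0] by simp
        have dv: "(n - 1 + k) div (k + 1) = 2 * m + 2"
          by (rule divq[of _ m k "3 * k + 1" 2]) (use nm j0 assms in simp_all)
        have "dimP k n \<le> real q + 1 / 2" using UB_mult[of n k] dv m assms by simp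
        moreover have "real q \<le> dimP k n"
          by (rule dim_ge) (use LB_c0 n0 in \<open>simp add: path_V_def\<close>)
        ultimately show ?thesis using ce by simp
      next
        assume j3: "k + 3 \<le> j \<and> j \<le> 2 * k + 1"
        have ce: "of_int \<lceil>real n / (2 * real k + 2)\<rceil> = real q + 1"
          using ceil1[OF nqj] j3 by simp
        have dv: "(n - 1 + k) div (k + 1) = 2 * q + 2"
          by (rule divq[of _ q k "j - 1 + k" 2]) (use nqj conjunct1[OF j3] conjunct2[OF j3] in simp_all)
        have "dimP k n \<le> real q + 3 / 2" using UB_mult[of n k] dv assms by simp
        moreover have "real m + 2 \<le> dimP k n"
          by (rule dim_ge) (use LB_c2[of k n _ m] nm j3 in \<open>simp add: path_V_def\<close>)
        ultimately show ?thesis using ce m by simp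
      qed
    qed
    show ?thesis using c1 c2 c3 by blast
  qed
  show ?thesis using A B C by blast
qed

end
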